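(* Let $K\in\mathcal{K}$, let $K'=R^{-1}B^\top P_K$, and let $\Psi_K=(K-K')^\top R(K-K')$. If $\Psi_K=0$, then $K=K^\star$.
   Context: Let $A\in\mathbb{R}^{n\times n}$, $B\in\mathbb{R}^{n\times m}$, $C\in\mathbb{R}^{p\times n}$, $D\in\mathbb{R}^{n\times q}$, $E\in\mathbb{R}^{p\times m}$, $\gamma>0$, with $Q:=C^\top C\succ 0$, $E^\top C=0$, $R:=E^\top E\succ 0$. For $K\in\mathbb{R}^{m\times n}$ set $A_K=A-BK$, $Q_K=Q+K^\top RK$, $T_{zw}(K)(s)=(C-EK)(sI-A+BK)^{-1}D$, and $\mathcal{K}=\{K:\ A_K\text{ Hurwitz},\ \|T_{zw}(K)\|_{\mathcal{H}_\infty}<\gamma\}$, where $\|G\|_{\mathcal{H}_\infty}=\sup_{\omega\in\mathbb{R}}\bar\sigma(G(j\omega))$. For $K\in\mathcal{K}$, $P_K$ denotes the unique symmetric positive definite solution of $A_K^\top P+PA_K+Q_K+\gamma^{-2}PDD^\top P=0$ for which $A_K+\gamma^{-2}DD^\top P_K$ is Hurwitz. $P^\star$ denotes the unique symmetric positive definite (stabilizing) solution of $A^\top P+PA-P(BR^{-1}B^\top-\gamma^{-2}DD^\top)P+Q=0$, and $K^\star=R^{-1}B^\top P^\star$. *)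

theory Defs
  imports "HOL-Analysis.Analysis"
begin

definition cmat :: "real^'c^'r \<Rightarrow> complex^'c^'r" where
  "cmat M = (\<chi> i j. complex_of_real (M $ i $ j))"

text \<open>Hurwitz: every (complex) eigenvalue has negative real part, i.e.
  sI - A is singular only for Re s < 0.\<close>
definition hurwitz :: "real^'n^'n \<Rightarrow> bool" where
  "hurwitz A \<longleftrightarrow> (\<forall>s::complex. det (mat s - cmat A) = 0 \<longrightarrow> Re s < 0)"

definition pos_def :: "real^'n^'n \<Rightarrow> bool" where
  "pos_def P \<longleftrightarrow> transpose P = P \<and> (\<forall>x. x \<noteq> 0 \<longrightarrow> x \<bullet> (P *v x) > 0)"

text \<open>Largest singular value = induced Euclidean operator norm.\<close>
definition max_sv :: "complex^'c^'r \<Rightarrow> real" where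
  "max_sv G = onorm (\<lambda>x. G *v x)"

definition Tzw :: "real^'n^'n \<Rightarrow> real^'m^'n \<Rightarrow> real^'n^'p \<Rightarrow> real^'q^'n \<Rightarrow> real^'m^'p
    \<Rightarrow> real^'n^'m \<Rightarrow> complex \<Rightarrow> complex^'q^'p" where
  "Tzw A B C D E K s = cmat (C - E ** K) ** matrix_inv (mat s - cmat (A - B ** K)) ** cmat D"

definition hinf_norm :: "(complex \<Rightarrow> complex^'q^'p) \<Rightarrow> real" where
  "hinf_norm G = (SUP \<omega>::real. max_sv (G (\<i> * complex_of_real \<omega>)))"

definition Kset :: "real^'n^'n \<Rightarrow> real^'m^'n \<Rightarrow> real^'n^'p \<Rightarrow> real^'q^'n \<Rightarrow> real^'m^'p
    \<Rightarrow> real \<Rightarrow> (real^'n^'m) set" where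
  "Kset A B C D E \<gamma> = {K. hurwitz (A - B ** K) \<and> hinf_norm (Tzw A B C D E K) < \<gamma>}"

definition PK_sol :: "real^'n^'n \<Rightarrow> real^'m^'n \<Rightarrow> real^'n^'p \<Rightarrow> real^'q^'n \<Rightarrow> real^'m^'p
    \<Rightarrow> real \<Rightarrow> real^'n^'m \<Rightarrow> real^'n^'n \<Rightarrow> bool" where
  "PK_sol A B C D E \<gamma> K P \<longleftrightarrow>
     (let AK = A - B ** K;
          QK = transpose C ** C + transpose K ** (transpose E ** E) ** K
      in pos_def P \<and>
         transpose AK ** P + P ** AK + QK + (1 / \<gamma>\<^sup>2) *\<^sub>R (P ** D ** transpose D ** P) = 0 \<and>
         hurwitz (AK + (1 / \<gamma>\<^sup>2) *\<^sub>R (D ** transpose D ** P)))"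

definition P_K :: "real^'n^'n \<Rightarrow> real^'m^'n \<Rightarrow> real^'n^'p \<Rightarrow> real^'q^'n \<Rightarrow> real^'m^'p
    \<Rightarrow> real \<Rightarrow> real^'n^'m \<Rightarrow> real^'n^'n" where
  "P_K A B C D E \<gamma> K = (THE P. PK_sol A B C D E \<gamma> K P)"

definition Pstar_sol :: "real^'n^'n \<Rightarrow> real^'m^'n \<Rightarrow> real^'n^'p \<Rightarrow> real^'q^'n \<Rightarrow> real^'m^'p
    \<Rightarrow> real \<Rightarrow> real^'n^'n \<Rightarrow> bool" where
  "Pstar_sol A B C D E \<gamma> P \<longleftrightarrow>
     (let R = transpose E ** E;
          S = B ** matrix_inv R ** transpose B - (1 / \<gamma>\<^sup>2) *\<^sub>R (D ** transpose D)
      in pos_def P \<and>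
         transpose A ** P + P ** A - P ** S ** P + transpose C ** C = 0 \<and>
         hurwitz (A - S ** P))"

definition P_star :: "real^'n^'n \<Rightarrow> real^'m^'n \<Rightarrow> real^'n^'p \<Rightarrow> real^'q^'n \<Rightarrow> real^'m^'p
    \<Rightarrow> real \<Rightarrow> real^'n^'n" where
  "P_star A B C D E \<gamma> = (THE P. Pstar_sol A B C D E \<gamma> P)"

definition K_star :: "real^'n^'n \<Rightarrow> real^'m^'n \<Rightarrow> real^'n^'p \<Rightarrow> real^'q^'n \<Rightarrow> real^'m^'p
    \<Rightarrow> real \<Rightarrow> real^'n^'m" where
  "K_star A B C D E \<gamma> = matrix_inv (transpose E ** E) ** transpose B ** P_star A B C D E \<gamma>"

end

theory Submission
  imports Defs
begin

lemma mm_add_r: "((A::real^'n^'m) + B) ** (C::real^'p^'n) = A ** C + B ** C"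
  by (vector matrix_matrix_mult_def sum.distrib[symmetric] field_simps)
lemma mm_sub_r: "((A::real^'n^'m) - B) ** (C::real^'p^'n) = A ** C - B ** C"
  by (vector matrix_matrix_mult_def sum_subtractf[symmetric] field_simps)
lemma mm_sub_l: "(A::real^'n^'m) ** ((B::real^'p^'n) - C) = A ** B - A ** C"
  by (vector matrix_matrix_mult_def sum_subtractf[symmetric] field_simps)
lemma tr_sub: "transpose ((A::real^'n^'m) - B) = transpose A - transpose B"
  by (simp add: transpose_def vec_eq_iff)
lemma tr_add: "transpose ((A::real^'n^'m) + B) = transpose A + transpose B"
  by (simp add: transpose_def vec_eq_iff)

lemma matrix_inv_props:
  fixes R :: "real^'n^'n"
  assumes "invertible R"
  shows "R ** matrix_inv R = mat 1" "matrix_inv R ** R = mat 1"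
proof -
  have "\<exists>A'. R ** A' = mat 1 \<and> A' ** R = mat 1" using assms by (simp add: invertible_def)
  then have "R ** matrix_inv R = mat 1 \<and> matrix_inv R ** R = mat 1"
    unfolding matrix_inv_def by (rule someI_ex)
  then show "R ** matrix_inv R = mat 1" "matrix_inv R ** R = mat 1" by auto
qed

lemma pos_def_invertible:
  fixes R :: "real^'n^'n"
  assumes "pos_def R"
  shows "invertible R"
proof -
  have "\<forall>x. R *v x = 0 \<longrightarrow> x = 0"
  proof (intro allI impI)
    fix x assume "R *v x = 0"
    then have "x \<bullet> (R *v x) = 0" by simp
    then show "x = 0" using assms unfolding pos_def_def by force
  qed
  then show ?thesis using matrix_left_invertible_ker invertible_left_inverse by blast
qed

lemma sym_inv:
  fixes R :: "real^'n^'n"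
  assumes "transpose R = R" "R ** Ri = mat 1" "Ri ** R = mat 1"
  shows "transpose Ri = Ri"
proof -
  have "transpose Ri ** R = mat 1"
    by (metis assms(1,2) matrix_transpose_mul transpose_mat)
  then have "transpose Ri = (transpose Ri ** R) ** Ri"
    by (metis assms(2) matrix_mul_assoc matrix_mul_rid)
  then show ?thesis using \<open>transpose Ri ** R = mat 1\<close> by simp
qed

lemma quad_zero:
  fixes M :: "real^'n^'m" and R :: "real^'m^'m"
  assumes "pos_def R" "transpose M ** R ** M = 0"
  shows "M = 0"
proof -
  have "\<forall>x. M *v x = 0 *v x"
  proof
    fix x
    have "x \<bullet> ((transpose M ** R ** M) *v x) = (M *v x) \<bullet> (R *v (M *v x))"
      by (metis dot_lmul_matrix inner_commute matrix_vector_mul_assoc transpose_matrix_vector)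
    then have "(M *v x) \<bullet> (R *v (M *v x)) = 0" using assms(2) by simp
    then show "M *v x = 0 *v x" using assms(1) unfolding pos_def_def by force
  qed
  then show ?thesis using matrix_eq by blast
qed

lemma cancel_l: "R ** Ri = mat 1 \<Longrightarrow> (R::real^'n^'n) ** (Ri ** (X::real^'p^'n)) = X"
  by (metis matrix_mul_assoc matrix_mul_lid)

theorem lemma4:
  fixes A :: "real^'n^'n" and B :: "real^'m^'n" and C :: "real^'n^'p"
    and D :: "real^'q^'n" and E :: "real^'m^'p" and \<gamma> :: real
    and K :: "real^'n^'m"
  assumes "\<gamma> > 0"
    and "pos_def (transpose C ** C)"
    and "transpose E ** C = 0"
    and "pos_def (transpose E ** E)"
    and "\<exists>!P. Pstar_sol A B C D E \<gamma> P"
    and "K \<in> Kset A B C D E \<gamma>"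
    and "\<exists>!P. PK_sol A B C D E \<gamma> K P"
  shows "let R = transpose E ** E;
             K' = matrix_inv R ** transpose B ** P_K A B C D E \<gamma> K;
             \<Psi> = transpose (K - K') ** R ** (K - K')
         in \<Psi> = 0 \<longrightarrow> K = K_star A B C D E \<gamma>"
proof -
  define R where "R = transpose E ** E"
  define Ri where "Ri = matrix_inv R"
  define P where "P = P_K A B C D E \<gamma> K"
  define c where "c = 1 / \<gamma>\<^sup>2"
  have RR: "R ** Ri = mat 1" "Ri ** R = mat 1"
    using matrix_inv_props pos_def_invertible assms(4) unfolding R_def Ri_def by blast+
  have Rs: "transpose R = R" using assms(4) unfolding R_def pos_def_def by blast
  have Ris: "transpose Ri = Ri" using sym_inv[OF Rs RR] .
  have PK: "PK_sol A B C D E \<gamma> K P" unfolding P_def P_K_def using assms(7) by (rule theI')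
  have Ps: "transpose P = P" using PK unfolding PK_sol_def Let_def pos_def_def by blast
  show ?thesis unfolding Let_def R_def[symmetric] Ri_def[symmetric] P_def[symmetric]
  proof
    assume "transpose (K - Ri ** transpose B ** P) ** R ** (K - Ri ** transpose B ** P) = 0"
    then have "K - Ri ** transpose B ** P = 0" using quad_zero assms(4) unfolding R_def by blast
    then have KK: "K = Ri ** transpose B ** P" by simp
    define G where "G = B ** Ri ** transpose B"
    have BK: "B ** K = G ** P" unfolding KK G_def by (simp add: matrix_mul_assoc)
    have KT: "transpose K = P ** B ** Ri" unfolding KK
      by (simp add: matrix_transpose_mul Ps Ris matrix_mul_assoc)
    have KRK: "transpose K ** R ** K = P ** G ** P" unfolding KT unfolding KK G_def
      by (simp add: matrix_mul_assoc[symmetric] cancel_l[OF RR(1)])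
    have BKT: "transpose (B ** K) = P ** G" unfolding G_def
      by (simp add: matrix_transpose_mul KT matrix_mul_assoc)
    have eq: "transpose (A - B ** K) ** P + P ** (A - B ** K) + (transpose C ** C + transpose K ** R ** K)
       + c *\<^sub>R (P ** D ** transpose D ** P) = 0"
      and hw: "hurwitz ((A - B ** K) + c *\<^sub>R (D ** transpose D ** P))"
      and pd: "pos_def P"
      using PK unfolding PK_sol_def Let_def R_def c_def by (auto simp: matrix_mul_assoc)
    have "Pstar_sol A B C D E \<gamma> P"
      unfolding Pstar_sol_def Let_def R_def[symmetric] Ri_def[symmetric] c_def[symmetric] G_def[symmetric]
    proof (intro conjI)
      show "pos_def P" by fact
      show "transpose A ** P + P ** A - P ** (G - c *\<^sub>R (D ** transpose D)) ** P + transpose C ** C = 0"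
        using eq BKT unfolding tr_sub KRK BK
        by (simp add: mm_sub_r mm_sub_l mm_add_r matrix_add_ldistrib matrix_scalar_ac scalar_matrix_assoc
            matrix_mul_assoc algebra_simps)
      show "hurwitz (A - (G - c *\<^sub>R (D ** transpose D)) ** P)"
        using hw unfolding BK
        by (simp add: mm_sub_r scalar_matrix_assoc matrix_mul_assoc algebra_simps)
    qed
    then have "P_star A B C D E \<gamma> = P" unfolding P_star_def using assms(5) by (metis the1_equality)
    then show "K = K_star A B C D E \<gamma>" unfolding K_star_def R_def[symmetric] Ri_def[symmetric] KK by simp
  qed
qed

end
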